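(* Let $\tau$ be a veering triangulation of $M$ with flow graph $\Phi$, and let $i_*:\mathbb{Z}[H_1(\Phi)]\to\mathbb{Z}[G]$ be induced by the inclusion $i:\Phi\to M$. Then $$V_\tau=i_*(P_\Phi)=1+\sum_{C}(-1)^{|C|}\,i_*([C]),$$ where the sum is over nonempty collections $C$ of pairwise vertex-disjoint simple directed cycles of $\Phi$.
   Context: $\tau$ is a veering triangulation of $M$ (taut ideal triangulation with cooriented faces, each tetrahedron having two bottom and two top faces, a bottom edge, a top edge and four side edges, angle sum $2\pi$ around edges, with a consistent right/left veer on edges modelled on a thickened rhombus whose side edges of positive slope are right-veering and of negative slope left-veering). $G=H_1(M;\mathbb{Z})/\mathrm{torsion}$ (multiplicative), $\hat M$ the cover with deck group $G$, $\tilde\tau$ the lift of $\tau$, $E$ the edge set. Veering polynomial: choosing a lift of each edge, let $L:\mathbb{Z}[G]^E\to\mathbb{Z}[G]^E$ send each edge $\mathbf b$ to $\mathbf b-(\mathbf t+\mathbf s_1+\mathbf s_2)$, where in the lifted tetrahedron having (the chosen lift of) $\mathbf b$ as its bottom edge, $\mathbf t$ is its top edge and $\mathbf s_1,\mathbf s_2$ its side edges of veer opposite to $\mathbf t$ (each written as a $G$-translate of a chosen lift); $V_\tau=\det L$. Flow graph $\Phi$: one vertex per edge of $\tau$; for each tetrahedron, directed edges from its bottom edge to its top edge and to the two side edges of veer opposite to the top edge; embedded in $M$ with vertices in the interiors of the corresponding edges, the edge to the top edge through the tetrahedron and the edges to side edges in the bottom faces. Perron polynomial $P_\Phi=\det(I-A)=1+\sum_C(-1)^{|C|}[C]\in\mathbb{Z}[H_1(\Phi)]$,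 $A$ the adjacency matrix. *)

theory Defs
  imports "HOL-Analysis.Analysis" "HOL-Library.Poly_Mapping"
begin

text \<open>Combinatorial encoding of a veering triangulation together with chosen lifts.
  'e : edges of tau, 't : tetrahedra, 'g : the deck group G (written additively).
  bedge t, tedge t : bottom / top edge of tetrahedron t; side t k (k < 4) : its four side edges;
  veer e : True iff e is right-veering.
  Lifts: in the lifted tetrahedron whose bottom edge is the chosen lift of bedge t, the top edge
  is the translate by htop t of the chosen lift of tedge t, and the side edge k is the
  translate by hside t k of the chosen lift of side t k.\<close>

text \<open>Group ring Z[G]: finitely supported functions G -> int with convolution product.
  The group element g is the basis element grp_elt g.\<close>
definition grp_elt :: "'g::ab_group_add \<Rightarrow> ('g \<Rightarrow>\<^sub>0 int)" where
  "grp_elt g = Poly_Mapping.single g 1"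

text \<open>Combinatorial part of the veering condition used in the statement.\<close>
definition veering_data ::
  "('t::finite \<Rightarrow> 'e::finite) \<Rightarrow> ('t \<Rightarrow> 'e) \<Rightarrow> ('t \<Rightarrow> nat \<Rightarrow> 'e) \<Rightarrow> ('e \<Rightarrow> bool) \<Rightarrow> bool" where
  "veering_data bedge tedge side veer \<longleftrightarrow>
     bij bedge \<and> bij tedge \<and>
     (\<forall>t. veer (side t 0) \<and> veer (side t 2) \<and> \<not> veer (side t 1) \<and> \<not> veer (side t 3))"

definition opp_sides :: "('t \<Rightarrow> 'e) \<Rightarrow> ('t \<Rightarrow> nat \<Rightarrow> 'e) \<Rightarrow> ('e \<Rightarrow> bool) \<Rightarrow> 't \<Rightarrow> nat set" where
  "opp_sides tedge side veer t = {k. k < 4 \<and> veer (side t k) \<noteq> veer (tedge t)}"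

text \<open>The matrix of L (column b is the image of the basis vector b) and V_tau = det L.\<close>
definition veering_matrix ::
  "('t::finite \<Rightarrow> 'e::finite) \<Rightarrow> ('t \<Rightarrow> 'e) \<Rightarrow> ('t \<Rightarrow> nat \<Rightarrow> 'e) \<Rightarrow> ('e \<Rightarrow> bool)
   \<Rightarrow> ('t \<Rightarrow> 'g::ab_group_add) \<Rightarrow> ('t \<Rightarrow> nat \<Rightarrow> 'g) \<Rightarrow> ('g \<Rightarrow>\<^sub>0 int)^'e^'e" where
  "veering_matrix bedge tedge side veer htop hside =
     (\<chi> u b. let t = inv bedge b in
        (if u = b then 1 else 0)
        - (if u = tedge t then grp_elt (htop t) else 0)
        - (\<Sum>k\<in>opp_sides tedge side veer t. if u = side t k then grp_elt (hside t k) else 0))"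

definition veering_poly ::
  "('t::finite \<Rightarrow> 'e::finite) \<Rightarrow> ('t \<Rightarrow> 'e) \<Rightarrow> ('t \<Rightarrow> nat \<Rightarrow> 'e) \<Rightarrow> ('e \<Rightarrow> bool)
   \<Rightarrow> ('t \<Rightarrow> 'g::ab_group_add) \<Rightarrow> ('t \<Rightarrow> nat \<Rightarrow> 'g) \<Rightarrow> ('g \<Rightarrow>\<^sub>0 int)" where
  "veering_poly bedge tedge side veer htop hside = det (veering_matrix bedge tedge side veer htop hside)"

text \<open>Flow graph Phi: vertices are the edges 'e; arcs are pairs (t,4) (bottom to tedge edge of t)
  and (t,k), k in opp_sides t (bottom edge to side edge k of t).\<close>
definition flow_arcs :: "('t \<Rightarrow> 'e) \<Rightarrow> ('t \<Rightarrow> nat \<Rightarrow> 'e) \<Rightarrow> ('e \<Rightarrow> bool) \<Rightarrow> ('t \<times> nat) set" where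
  "flow_arcs tedge side veer = {(t, k). k = 4 \<or> k \<in> opp_sides tedge side veer t}"

definition arc_src :: "('t \<Rightarrow> 'e) \<Rightarrow> 't \<times> nat \<Rightarrow> 'e" where
  "arc_src bedge a = bedge (fst a)"

definition arc_tgt :: "('t \<Rightarrow> 'e) \<Rightarrow> ('t \<Rightarrow> nat \<Rightarrow> 'e) \<Rightarrow> 't \<times> nat \<Rightarrow> 'e" where
  "arc_tgt tedge side a = (if snd a = 4 then tedge (fst a) else side (fst a) (snd a))"

text \<open>i_* of an arc, relative to the chosen lifts of its endpoints: the deck translation
  carrying the chosen lift of the target to the endpoint of the lift of the arc starting at
  the chosen lift of the source. For a closed cycle, i_*([cycle]) is the sum of these.\<close>
definition arc_label :: "('t \<Rightarrow> 'g) \<Rightarrow> ('t \<Rightarrow> nat \<Rightarrow> 'g) \<Rightarrow> 't \<times> nat \<Rightarrow> 'g" where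
  "arc_label htop hside a = (if snd a = 4 then htop (fst a) else hside (fst a) (snd a))"

text \<open>Simple directed cycles of Phi, as sets of arcs (i.e. up to cyclic rotation).\<close>
definition simple_cycle ::
  "('t \<Rightarrow> 'e) \<Rightarrow> ('t \<Rightarrow> 'e) \<Rightarrow> ('t \<Rightarrow> nat \<Rightarrow> 'e) \<Rightarrow> ('e \<Rightarrow> bool) \<Rightarrow> ('t \<times> nat) set \<Rightarrow> bool" where
  "simple_cycle bedge tedge side veer S \<longleftrightarrow>
     (\<exists>as. as \<noteq> [] \<and> set as = S \<and> set as \<subseteq> flow_arcs tedge side veer \<and>
        distinct (map (arc_src bedge) as) \<and>
        (\<forall>i < length as. arc_tgt tedge side (as ! i) = arc_src bedge (as ! ((i + 1) mod length as))))"

definition cycle_collections ::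
  "('t \<Rightarrow> 'e) \<Rightarrow> ('t \<Rightarrow> 'e) \<Rightarrow> ('t \<Rightarrow> nat \<Rightarrow> 'e) \<Rightarrow> ('e \<Rightarrow> bool) \<Rightarrow> ('t \<times> nat) set set set" where
  "cycle_collections bedge tedge side veer =
     {C. C \<noteq> {} \<and> (\<forall>S\<in>C. simple_cycle bedge tedge side veer S) \<and>
         (\<forall>S1\<in>C. \<forall>S2\<in>C. S1 \<noteq> S2 \<longrightarrow> arc_src bedge ` S1 \<inter> arc_src bedge ` S2 = {})}"

definition cycle_class ::
  "('t \<Rightarrow> 'g::ab_group_add) \<Rightarrow> ('t \<Rightarrow> nat \<Rightarrow> 'g) \<Rightarrow> ('t \<times> nat) set set \<Rightarrow> ('g \<Rightarrow>\<^sub>0 int)" where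
  "cycle_class htop hside C = grp_elt (\<Sum>S\<in>C. \<Sum>a\<in>S. arc_label htop hside a)"

definition flow_adj ::
  "('t::finite \<Rightarrow> 'e::finite) \<Rightarrow> ('t \<Rightarrow> 'e) \<Rightarrow> ('t \<Rightarrow> nat \<Rightarrow> 'e) \<Rightarrow> ('e \<Rightarrow> bool)
   \<Rightarrow> ('t \<Rightarrow> 'g::ab_group_add) \<Rightarrow> ('t \<Rightarrow> nat \<Rightarrow> 'g) \<Rightarrow> ('g \<Rightarrow>\<^sub>0 int)^'e^'e" where
  "flow_adj bedge tedge side veer htop hside =
     (\<chi> u v. \<Sum>a\<in>{a \<in> flow_arcs tedge side veer. arc_src bedge a = u \<and> arc_tgt tedge side a = v}.
                grp_elt (arc_label htop hside a))"

end

theory Submission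
  imports Defs "HOL-Combinatorics.Cycles"
begin

definition gsc :: "('a \<Rightarrow> 'e) \<Rightarrow> ('a \<Rightarrow> 'e) \<Rightarrow> 'a set \<Rightarrow> 'a set \<Rightarrow> bool" where
 "gsc src tgt Ar S \<longleftrightarrow> (\<exists>as. as \<noteq> [] \<and> set as = S \<and> set as \<subseteq> Ar \<and> distinct (map src as) \<and>
    (\<forall>i<length as. tgt (as!i) = src (as!((i+1) mod length as))))"

definition gcc :: "('a \<Rightarrow> 'e) \<Rightarrow> ('a \<Rightarrow> 'e) \<Rightarrow> 'a set \<Rightarrow> 'a set set set" where
 "gcc src tgt Ar = {C. C \<noteq> {} \<and> (\<forall>S\<in>C. gsc src tgt Ar S) \<and>
     (\<forall>S1\<in>C. \<forall>S2\<in>C. S1 \<noteq> S2 \<longrightarrow> src ` S1 \<inter> src ` S2 = {})}"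

definition gD :: "('a \<Rightarrow> 'e) \<Rightarrow> ('a \<Rightarrow> 'e) \<Rightarrow> 'a set \<Rightarrow> 'a set set" where
 "gD src tgt Ar = {D. D \<subseteq> Ar \<and> inj_on src D \<and> inj_on tgt D \<and> src ` D = tgt ` D}"

definition permD :: "('a \<Rightarrow> 'e) \<Rightarrow> ('a \<Rightarrow> 'e) \<Rightarrow> 'a set \<Rightarrow> 'e \<Rightarrow> 'e" where
 "permD src tgt D v = (if v \<in> src ` D then tgt (THE a. a \<in> D \<and> src a = v) else v)"

lemma the_src: "inj_on src D \<Longrightarrow> a \<in> D \<Longrightarrow> (THE x. x \<in> D \<and> src x = src a) = a"
  by (rule the_equality) (auto dest: inj_onD)

lemma permD_in: "inj_on src D \<Longrightarrow> a \<in> D \<Longrightarrow> permD src tgt D (src a) = tgt a"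
  unfolding permD_def using the_src by fastforce

lemma permD_out: "v \<notin> src ` D \<Longrightarrow> permD src tgt D v = v"
  unfolding permD_def by simp

lemma sign_cycle: "distinct cs \<Longrightarrow> sign (cycle_of_list cs) = (-1) ^ (length cs - 1)"
proof (induction cs rule: cycle_of_list.induct)
  case (1 i j cs)
  have "sign (cycle_of_list (i # j # cs)) = sign (Transposition.transpose i j) * sign (cycle_of_list (j # cs))"
    by (simp add: sign_compose permutation_swap_id permutation_of_cycle)
  also have "\<dots> = (-1) ^ (length (i # j # cs) - 1)"
    using 1 by (simp add: sign_swap_id)
  finally show ?case .
qed (simp_all add: sign_id)

lemma gsc_list:
  assumes "as \<noteq> []" "distinct (map src as)"
    "\<forall>i<length as. tgt (as!i) = src (as!((i+1) mod length as))"
  shows "map tgt as = rotate1 (map src as)"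
  by (rule nth_equalityI) (use assms in \<open>auto simp: nth_rotate1\<close>)

lemma gsc_props:
  assumes "gsc src tgt Ar S"
  shows "S \<subseteq> Ar" "S \<noteq> {}" "finite S" "inj_on src S" "inj_on tgt S" "tgt ` S = src ` S"
    "sign (permD src tgt S) = (-1) ^ (card S - 1)" "permutation (permD src tgt S)"
proof -
  obtain as where as: "as \<noteq> []" "set as = S" "set as \<subseteq> Ar" "distinct (map src as)"
    "\<forall>i<length as. tgt (as!i) = src (as!((i+1) mod length as))"
    using assms unfolding gsc_def by blast
  have rot: "map tgt as = rotate1 (map src as)" using gsc_list as by blast
  show "S \<subseteq> Ar" "S \<noteq> {}" "finite S" using as by auto
  show "inj_on src S" using as distinct_map by blast
  have "distinct (map tgt as)" using rot as by simp
  then show "inj_on tgt S" using as distinct_map by blast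
  have "set (map tgt as) = set (map src as)" using rot by simp
  then show "tgt ` S = src ` S" using as by simp
  have dist: "distinct as" using as distinct_map by blast
  have card: "card S = length as" using as dist distinct_card by blast
  have pc: "permD src tgt S = cycle_of_list (map src as)"
  proof
    fix v
    show "permD src tgt S v = cycle_of_list (map src as) v"
    proof (cases "v \<in> src ` S")
      case True
      then obtain i where i: "i < length as" "v = src (as!i)" using as by (auto simp: in_set_conv_nth)
      have "permD src tgt S v = tgt (as!i)"
        using i permD_in[of src S "as!i" tgt] \<open>inj_on src S\<close> as by auto
      also have "\<dots> = src (as!((i+1) mod length as))" using as i by auto
      also have "\<dots> = rotate1 (map src as) ! i" using i as(1) by (simp add: nth_rotate1)
      also have "\<dots> = map (cycle_of_list (map src as)) (map src as) ! i"
        using cyclic_rotation[of "map src as" 1] as by simp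
      also have "\<dots> = cycle_of_list (map src as) v" using i by simp
      finally show ?thesis .
    next
      case False
      then show ?thesis using permD_out[OF False] id_outside_supp[of v "map src as"] as by auto
    qed
  qed
  show "sign (permD src tgt S) = (-1) ^ (card S - 1)"
    using pc sign_cycle[of "map src as"] as card by simp
  show "permutation (permD src tgt S)" using pc permutation_of_cycle by simp
qed


definition pdisj :: "('a \<Rightarrow> 'e) \<Rightarrow> 'a set set \<Rightarrow> bool" where
  "pdisj src C \<longleftrightarrow> (\<forall>S1\<in>C. \<forall>S2\<in>C. S1 \<noteq> S2 \<longrightarrow> src ` S1 \<inter> src ` S2 = {})"

lemma union_gD:
  assumes "\<forall>S\<in>C. gsc src tgt Ar S" "pdisj src C"
  shows "\<Union>C \<in> gD src tgt Ar"
proof -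
  have eq: "\<And>S. S \<in> C \<Longrightarrow> tgt ` S = src ` S" using assms(1) gsc_props(6)[of src tgt Ar] by blast
  have isrc: "\<And>S. S \<in> C \<Longrightarrow> inj_on src S" using assms(1) gsc_props(4)[of src tgt Ar] by blast
  have it: "\<And>S. S \<in> C \<Longrightarrow> inj_on tgt S" using assms(1) gsc_props(5)[of src tgt Ar] by blast
  have dj: "\<And>S1 S2. S1 \<in> C \<Longrightarrow> S2 \<in> C \<Longrightarrow> S1 \<noteq> S2 \<Longrightarrow> src ` S1 \<inter> src ` S2 = {}"
    using assms(2) unfolding pdisj_def by blast
  have srcinj: "inj_on src (\<Union>C)"
  proof (rule inj_onI)
    fix a b assume "a \<in> \<Union>C" "b \<in> \<Union>C" and ab: "src a = src b"
    then obtain S1 S2 where s: "a \<in> S1" "S1 \<in> C" "b \<in> S2" "S2 \<in> C" by auto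
    show "a = b"
    proof (cases "S1 = S2")
      case True
      then show ?thesis using s isrc[OF s(2)] ab by (auto dest: inj_onD)
    next
      case False
      have "src a \<in> src ` S1" "src b \<in> src ` S2" using s by auto
      then show ?thesis using dj[OF s(2) s(4) False] ab by auto
    qed
  qed
  have tgtinj: "inj_on tgt (\<Union>C)"
  proof (rule inj_onI)
    fix a b assume "a \<in> \<Union>C" "b \<in> \<Union>C" and ab: "tgt a = tgt b"
    then obtain S1 S2 where s: "a \<in> S1" "S1 \<in> C" "b \<in> S2" "S2 \<in> C" by auto
    show "a = b"
    proof (cases "S1 = S2")
      case True
      then show ?thesis using s it[OF s(2)] ab by (auto dest: inj_onD)
    next
      case False
      have "tgt a \<in> tgt ` S1" "tgt b \<in> tgt ` S2" using s by auto
      then have "tgt a \<in> src ` S1" "tgt b \<in> src ` S2" using eq[OF s(2)] eq[OF s(4)] by auto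
      then show ?thesis using dj[OF s(2) s(4) False] ab by auto
    qed
  qed
  have im: "tgt ` \<Union>C = src ` \<Union>C"
  proof -
    have "tgt ` \<Union>C = (\<Union>S\<in>C. tgt ` S)" by auto
    also have "\<dots> = (\<Union>S\<in>C. src ` S)" using eq by auto
    also have "\<dots> = src ` \<Union>C" by auto
    finally show ?thesis .
  qed
  have "\<Union>C \<subseteq> Ar" using assms(1) gsc_props(1)[of src tgt Ar] by blast
  then show ?thesis using srcinj tgtinj im unfolding gD_def by auto
qed

lemma permD_union:
  assumes "inj_on src (D1 \<union> D2)" "src ` D1 \<inter> src ` D2 = {}" "tgt ` D2 = src ` D2"
  shows "permD src tgt (D1 \<union> D2) = permD src tgt D1 \<circ> permD src tgt D2"
proof
  fix v
  show "permD src tgt (D1 \<union> D2) v = (permD src tgt D1 \<circ> permD src tgt D2) v"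
  proof (cases "v \<in> src ` D2")
    case True
    then obtain a where a: "a \<in> D2" "v = src a" by auto
    have i2: "inj_on src D2" using assms(1) inj_on_subset by blast
    have "tgt a \<notin> src ` D1" using assms(2,3) a by blast
    then show ?thesis using a permD_in[OF assms(1), of a tgt] permD_in[OF i2 a(1), of tgt]
      permD_out[of "tgt a" src D1 tgt] by simp
  next
    case False
    note F = False
    show ?thesis
    proof (cases "v \<in> src ` D1")
      case True
      then obtain a where a: "a \<in> D1" "v = src a" by auto
      have i1: "inj_on src D1" using assms(1) inj_on_subset by blast
      show ?thesis using a permD_in[OF assms(1), of a tgt] permD_in[OF i1 a(1), of tgt]
        permD_out[OF F, of tgt] by simp
    next
      case False
      then show ?thesis using F by (simp add: permD_def image_Un)
    qed
  qed
qed

lemma sign_union: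
  assumes "finite C" "\<forall>S\<in>C. gsc src tgt Ar S" "pdisj src C"
  shows "permutation (permD src tgt (\<Union>C)) \<and>
    sign (permD src tgt (\<Union>C)) * (-1) ^ card (\<Union>C) = (-1) ^ card C"
  using assms
proof (induction C rule: finite_induct)
  case empty
  have "permD src tgt {} = id" by (auto simp: permD_def)
  then show ?case by simp
next
  case (insert S C)
  have pd: "pdisj src C" using insert.prems unfolding pdisj_def by blast
  have IH: "permutation (permD src tgt (\<Union>C))"
    "sign (permD src tgt (\<Union>C)) * (-1) ^ card (\<Union>C) = (-1) ^ card C"
    using insert pd by auto
  have gS: "gsc src tgt Ar S" using insert.prems by auto
  have dis: "src ` S \<inter> src ` \<Union>C = {}"
  proof (rule equals0I)
    fix x assume "x \<in> src ` S \<inter> src ` \<Union>C"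
    then obtain S' where S': "S' \<in> C" "x \<in> src ` S" "x \<in> src ` S'" by auto
    have "S \<noteq> S'" using S'(1) insert.hyps(2) by auto
    then have "src ` S \<inter> src ` S' = {}" using insert.prems(2) S'(1) unfolding pdisj_def by simp
    then show False using S' by auto
  qed
  have gU: "\<Union>(insert S C) \<in> gD src tgt Ar" by (rule union_gD[OF insert.prems])
  have gC: "\<Union>C \<in> gD src tgt Ar" using insert.prems(1) pd by (intro union_gD) auto
  have gUi: "inj_on src (S \<union> \<Union>C)" using gU by (simp add: gD_def)
  have gCt: "tgt ` \<Union>C = src ` \<Union>C" using gC by (simp add: gD_def)
  have pe: "permD src tgt (\<Union>(insert S C)) = permD src tgt S \<circ> permD src tgt (\<Union>C)"
    using permD_union[OF gUi dis gCt] by simp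
  have fin: "finite (\<Union>C)"
    using insert.prems(1) by (intro finite_Union[OF insert.hyps(1)]) (auto intro: gsc_props(3)[of src tgt Ar])
  have SC: "S \<inter> \<Union>C = {}" using dis by blast
  have cardU: "card (\<Union>(insert S C)) = card S + card (\<Union>C)"
    using card_Un_disjoint[OF gsc_props(3)[OF gS] fin SC] by simp
  have "card S \<noteq> 0" using gsc_props(2,3)[OF gS] by simp
  then obtain m where m: "card S = Suc m" using not0_implies_Suc by blast
  have sc: "sign (permD src tgt (\<Union>(insert S C))) = sign (permD src tgt S) * sign (permD src tgt (\<Union>C))"
    unfolding pe by (rule sign_compose[OF gsc_props(8)[OF gS] IH(1)])
  have mm: "(-1::int)^m * (-1)^Suc m = -1" by (induct m) auto
  have "sign (permD src tgt (\<Union>(insert S C))) * (-1) ^ card (\<Union>(insert S C))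
      = ((-1::int)^m * (-1)^Suc m) * (sign (permD src tgt (\<Union>C)) * (-1) ^ card (\<Union>C))"
    unfolding sc cardU gsc_props(7)[OF gS] m power_add by simp
  also have "\<dots> = (-1) ^ card (insert S C)" unfolding mm IH(2) using insert.hyps by simp
  finally have s: "sign (permD src tgt (\<Union>(insert S C))) * (-1) ^ card (\<Union>(insert S C)) = (-1) ^ card (insert S C)" .
  have "permutation (permD src tgt (\<Union>(insert S C)))"
    unfolding pe by (rule permutation_compose[OF gsc_props(8)[OF gS] IH(1)])
  with s show ?case by blast
qed


definition nxt :: "('a\<Rightarrow>'e) \<Rightarrow> ('a\<Rightarrow>'e) \<Rightarrow> 'a set \<Rightarrow> 'a \<Rightarrow> 'a" where
  "nxt src tgt D b = (THE a. a \<in> D \<and> src a = tgt b)"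
definition per :: "('a\<Rightarrow>'e) \<Rightarrow> ('a\<Rightarrow>'e) \<Rightarrow> 'a set \<Rightarrow> 'a \<Rightarrow> nat" where
  "per src tgt D b = (LEAST n. 0 < n \<and> (nxt src tgt D ^^ n) b = b)"
definition orb :: "('a\<Rightarrow>'e) \<Rightarrow> ('a\<Rightarrow>'e) \<Rightarrow> 'a set \<Rightarrow> 'a \<Rightarrow> 'a set" where
  "orb src tgt D b = range (\<lambda>n. (nxt src tgt D ^^ n) b)"
definition orbits :: "('a\<Rightarrow>'e) \<Rightarrow> ('a\<Rightarrow>'e) \<Rightarrow> 'a set \<Rightarrow> 'a set set" where
  "orbits src tgt D = orb src tgt D ` D"

locale dset =
  fixes src :: "'a \<Rightarrow> 'e" and tgt :: "'a \<Rightarrow> 'e" and Ar :: "'a set" and D :: "'a set"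
  assumes fin: "finite D" and gd: "D \<in> gD src tgt Ar"
begin

abbreviation N where "N \<equiv> nxt src tgt D"

lemma isrc: "inj_on src D" and itgt: "inj_on tgt D" and im: "src ` D = tgt ` D" and sub: "D \<subseteq> Ar"
  using gd unfolding gD_def by auto

lemma nxt_in: assumes "b \<in> D" shows "N b \<in> D" "src (N b) = tgt b"
proof -
  have "tgt b \<in> src ` D" using im assms by blast
  then obtain a where a: "a \<in> D" "src a = tgt b" by auto
  have "N b = a" unfolding nxt_def using the_src[OF isrc a(1)] a(2) by simp
  then show "N b \<in> D" "src (N b) = tgt b" using a by auto
qed

lemma pow_in: "b \<in> D \<Longrightarrow> (N ^^ n) b \<in> D"
  by (induction n) (auto intro: nxt_in)

lemma nxt_inj: assumes "b \<in> D" "c \<in> D" "N b = N c" shows "b = c"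
proof -
  have "tgt b = src (N b)" using nxt_in(2)[OF assms(1)] by simp
  also have "\<dots> = tgt c" using nxt_in(2)[OF assms(2)] assms(3) by simp
  finally show ?thesis using inj_onD[OF itgt _ assms(1,2)] by blast
qed

lemma pow_cancel: "b \<in> D \<Longrightarrow> c \<in> D \<Longrightarrow> (N ^^ m) b = (N ^^ m) c \<Longrightarrow> b = c"
proof (induction m arbitrary: b c)
  case (Suc m)
  then have "(N ^^ m) b = (N ^^ m) c" using nxt_inj pow_in by simp
  then show ?case using Suc by blast
qed simp

lemma per_ex: assumes "b \<in> D" shows "\<exists>n>0. (N ^^ n) b = b"
proof -
  let ?f = "\<lambda>n. (N ^^ n) b"
  have "\<not> inj_on ?f {..card D}"
  proof
    assume "inj_on ?f {..card D}"
    moreover have "?f ` {..card D} \<subseteq> D" using pow_in assms by auto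
    ultimately have "card {..card D} \<le> card D" using card_inj_on_le fin by blast
    then show False by simp
  qed
  then obtain x y where xy: "x \<le> card D" "y \<le> card D" "x \<noteq> y" "?f x = ?f y"
    unfolding inj_on_def by auto
  have key: "\<exists>n>0. (N ^^ n) b = b" if "x < y" "?f x = ?f y" for x y
  proof -
    have "(N ^^ y) b = (N ^^ (x + (y - x))) b" using \<open>x < y\<close> by simp
    also have "\<dots> = (N ^^ x) ((N ^^ (y - x)) b)" by (simp add: funpow_add)
    finally have "(N ^^ x) b = (N ^^ x) ((N ^^ (y - x)) b)" using that by simp
    then have "b = (N ^^ (y - x)) b" using pow_cancel assms pow_in by blast
    then show "\<exists>n>0. (N ^^ n) b = b" using \<open>x < y\<close> by (intro exI[of _ "y - x"]) auto
  qed
  show ?thesis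
  proof (cases "x < y")
    case True then show ?thesis using key xy by blast
  next
    case False then have "y < x" using xy by simp
    then show ?thesis using key[of y x] xy(4) by simp
  qed
qed

lemma per: assumes "b \<in> D" shows "0 < per src tgt D b" "(N ^^ per src tgt D b) b = b"
  using LeastI_ex[OF per_ex[OF assms]] unfolding per_def by auto

lemma per_min: "0 < n \<Longrightarrow> n < per src tgt D b \<Longrightarrow> (N ^^ n) b \<noteq> b"
  unfolding per_def using not_less_Least by blast

lemma pow_mult: assumes "b \<in> D" shows "(N ^^ (per src tgt D b * k)) b = b"
proof (induction k)
  case (Suc k)
  have "(N ^^ (per src tgt D b * Suc k)) b = (N ^^ per src tgt D b) ((N ^^ (per src tgt D b * k)) b)"
    by (simp add: funpow_add)
  then show ?case using Suc per[OF assms] by simp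
qed simp

lemma pow_mod: assumes "b \<in> D" shows "(N ^^ n) b = (N ^^ (n mod per src tgt D b)) b"
proof -
  let ?p = "per src tgt D b"
  have "(N ^^ n) b = (N ^^ (n mod ?p + ?p * (n div ?p))) b" by (simp only: mod_mult_div_eq)
  also have "\<dots> = (N ^^ (n mod ?p)) ((N ^^ (?p * (n div ?p))) b)" by (simp only: funpow_add o_apply)
  also have "\<dots> = (N ^^ (n mod ?p)) b" using pow_mult[OF assms] by simp
  finally show ?thesis .
qed

lemma orb_sub: "b \<in> D \<Longrightarrow> orb src tgt D b \<subseteq> D"
  unfolding orb_def using pow_in by auto

lemma orb_self: "b \<in> orb src tgt D b"
  unfolding orb_def by (metis funpow_0 rangeI)

lemma orb_eq: assumes "b \<in> D" "c \<in> orb src tgt D b" shows "orb src tgt D c = orb src tgt D b"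
proof -
  obtain m where m: "c = (N ^^ m) b" using assms(2) unfolding orb_def by auto
  let ?p = "per src tgt D b"
  show ?thesis
  proof
    show "orb src tgt D c \<subseteq> orb src tgt D b"
    proof
      fix x assume "x \<in> orb src tgt D c"
      then obtain n where n: "x = (N ^^ n) c" unfolding orb_def by auto
      have "x = (N ^^ (n + m)) b" unfolding n m by (simp add: funpow_add)
      then show "x \<in> orb src tgt D b" unfolding orb_def by auto
    qed
    show "orb src tgt D b \<subseteq> orb src tgt D c"
    proof
      fix x assume "x \<in> orb src tgt D b"
      then obtain n where n: "x = (N ^^ n) b" unfolding orb_def by auto
      have "1 * Suc m \<le> ?p * Suc m" using per(1)[OF assms(1)] by (intro mult_le_mono1) simp
      then have pm: "?p * Suc m \<ge> m" by simp
      have "(N ^^ (?p * Suc m - m + n)) c = (N ^^ (?p * Suc m - m + n + m)) b"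
        unfolding m by (simp add: funpow_add)
      also have "?p * Suc m - m + n + m = n + ?p * Suc m" using pm by simp
      also have "(N ^^ (n + ?p * Suc m)) b = (N ^^ n) b"
        by (simp only: funpow_add o_apply pow_mult[OF assms(1)])
      finally have F: "(N ^^ (?p * Suc m - m + n)) c = (N ^^ n) b" .
      show "x \<in> orb src tgt D c" unfolding orb_def n using F[symmetric] by (rule range_eqI)
    qed
  qed
qed

lemma orb_gsc: assumes "b \<in> D" shows "gsc src tgt Ar (orb src tgt D b)"
proof -
  let ?p = "per src tgt D b"
  define as where "as = map (\<lambda>i. (N ^^ i) b) [0..<?p]"
  have len: "length as = ?p" unfolding as_def by simp
  have setas: "set as = orb src tgt D b"
  proof
    show "set as \<subseteq> orb src tgt D b" unfolding as_def orb_def by auto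
    show "orb src tgt D b \<subseteq> set as"
    proof
      fix x assume "x \<in> orb src tgt D b"
      then obtain n where "x = (N ^^ n) b" unfolding orb_def by auto
      then have "x = (N ^^ (n mod ?p)) b" using pow_mod[OF assms] by simp
      moreover have "n mod ?p < ?p" using per(1)[OF assms] by simp
      ultimately show "x \<in> set as" unfolding as_def by auto
    qed
  qed
  have dist: "distinct as"
    unfolding as_def distinct_conv_nth
  proof (intro allI impI)
    fix i j assume ij: "i < length (map (\<lambda>i. (N ^^ i) b) [0..<?p])"
      "j < length (map (\<lambda>i. (N ^^ i) b) [0..<?p])" "i \<noteq> j"
    show "map (\<lambda>i. (N ^^ i) b) [0..<?p] ! i \<noteq> map (\<lambda>i. (N ^^ i) b) [0..<?p] ! j"
    proof
      assume eq: "map (\<lambda>i. (N ^^ i) b) [0..<?p] ! i = map (\<lambda>i. (N ^^ i) b) [0..<?p] ! j"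
      have key: False if "i < j" "j < ?p" "(N ^^ i) b = (N ^^ j) b" for i j
      proof -
        have "(N ^^ j) b = (N ^^ (i + (j - i))) b" using \<open>i < j\<close> by simp
        also have "\<dots> = (N ^^ i) ((N ^^ (j - i)) b)" by (simp add: funpow_add)
        finally have "(N ^^ i) b = (N ^^ i) ((N ^^ (j - i)) b)" using that by simp
        then have "b = (N ^^ (j - i)) b" using pow_cancel assms pow_in by blast
        moreover have "j - i < ?p" using that by simp
        then have "(N ^^ (j - i)) b \<noteq> b" by (intro per_min) (use that in auto)
        ultimately show False by simp
      qed
      have e2: "(N ^^ i) b = (N ^^ j) b" using eq ij by simp
      show False
      proof (cases "i < j")
        case True then show False using key e2 ij by simp
      next
        case False then have "j < i" using ij by simp
        then show False using key[of j i] e2[symmetric] ij by simp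
      qed
    qed
  qed
  have sub': "set as \<subseteq> D" using setas orb_sub[OF assms] by simp
  have dsrc: "distinct (map src as)"
    using dist sub' isrc by (simp add: distinct_map inj_on_subset)
  have cyc: "\<forall>i<length as. tgt (as!i) = src (as!((i+1) mod length as))"
  proof (intro allI impI)
    fix i assume i: "i < length as"
    have "(i + 1) mod ?p < ?p" using per(1)[OF assms] by simp
    then have "as!((i+1) mod length as) = (N ^^ ((i+1) mod ?p)) b" unfolding as_def by simp
    also have "\<dots> = (N ^^ (i+1)) b" using pow_mod[OF assms, of "i+1"] by simp
    also have "\<dots> = N ((N ^^ i) b)" by simp
    finally have "src (as!((i+1) mod length as)) = tgt ((N ^^ i) b)"
      using nxt_in(2)[OF pow_in[OF assms]] by simp
    moreover have "as!i = (N ^^ i) b" using i len unfolding as_def by simp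
    ultimately show "tgt (as!i) = src (as!((i+1) mod length as))" by simp
  qed
  have "as \<noteq> []" using len per(1)[OF assms] by auto
  then show ?thesis unfolding gsc_def using setas sub' sub dsrc cyc by blast
qed

lemma union_orbits: "\<Union>(orbits src tgt D) = D"
  unfolding orbits_def using orb_sub orb_self by blast

lemma orbits_gcc: assumes "D \<noteq> {}" shows "orbits src tgt D \<in> gcc src tgt Ar"
proof -
  have "\<forall>S\<in>orbits src tgt D. gsc src tgt Ar S" unfolding orbits_def using orb_gsc by blast
  moreover have "orbits src tgt D \<noteq> {}" using assms unfolding orbits_def by simp
  moreover have "src ` S1 \<inter> src ` S2 = {}" if S: "S1 \<in> orbits src tgt D" "S2 \<in> orbits src tgt D" "S1 \<noteq> S2" for S1 S2
  proof (rule equals0I)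
    fix x assume "x \<in> src ` S1 \<inter> src ` S2"
    then obtain a1 a2 where a: "a1 \<in> S1" "a2 \<in> S2" "src a1 = src a2" "x = src a1" by auto
    obtain b1 b2 where b: "b1 \<in> D" "S1 = orb src tgt D b1" "b2 \<in> D" "S2 = orb src tgt D b2"
      using S(1,2) unfolding orbits_def by auto
    have "a1 \<in> D" "a2 \<in> D" using a(1,2) b orb_sub by blast+
    then have "a1 = a2" using inj_onD[OF isrc a(3)] by blast
    have "orb src tgt D a1 = S1" using orb_eq[OF b(1)] a(1) b(2) by simp
    moreover have "orb src tgt D a2 = S2" using orb_eq[OF b(3)] a(2) b(4) by simp
    ultimately show False using S(3) \<open>a1 = a2\<close> by simp
  qed
  ultimately show ?thesis unfolding gcc_def by (simp only: mem_Collect_eq) blast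
qed

end


lemma gcc_pdisj: "C \<in> gcc src tgt Ar \<Longrightarrow> pdisj src C"
  unfolding gcc_def pdisj_def by blast

lemma gcc_gsc: "C \<in> gcc src tgt Ar \<Longrightarrow> S \<in> C \<Longrightarrow> gsc src tgt Ar S"
  unfolding gcc_def by blast

lemma gcc_finite: assumes "finite Ar" "C \<in> gcc src tgt Ar" shows "finite C"
proof -
  have "C \<subseteq> Pow Ar" using gcc_gsc[OF assms(2)] gsc_props(1) by blast
  then show ?thesis using assms(1) finite_subset by blast
qed

lemma orbits_union:
  assumes fA: "finite Ar" and C: "C \<in> gcc src tgt Ar"
  shows "orbits src tgt (\<Union>C) = C"
proof -
  let ?D = "\<Union>C"
  have gd: "?D \<in> gD src tgt Ar"
    by (rule union_gD) (use gcc_gsc[OF C] gcc_pdisj[OF C] in auto)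
  have fD: "finite ?D" using gd fA unfolding gD_def by (auto intro: finite_subset)
  interpret dset src tgt Ar ?D using gd fD by unfold_locales
  have key: "orb src tgt ?D a = S" if S: "S \<in> C" "a \<in> S" for S a
  proof -
    obtain as where as: "as \<noteq> []" "set as = S" "set as \<subseteq> Ar" "distinct (map src as)"
      "\<forall>i<length as. tgt (as!i) = src (as!((i+1) mod length as))"
      using gcc_gsc[OF C S(1)] unfolding gsc_def by blast
    let ?l = "length as"
    have lpos: "0 < ?l" using as(1) by simp
    have inD: "as ! j \<in> ?D" if "j < ?l" for j
    proof -
      have "as ! j \<in> S" using that as(2) nth_mem by blast
      then show ?thesis using S(1) by blast
    qed
    have nx: "N (as!i) = as!((i+1) mod ?l)" if i: "i < ?l" for i
      unfolding nxt_def
    proof (rule the_equality)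
      show "as ! ((i + 1) mod ?l) \<in> ?D \<and> src (as ! ((i + 1) mod ?l)) = tgt (as ! i)"
        using inD[of "(i+1) mod ?l"] lpos as(5) i by simp
      fix x assume x: "x \<in> ?D \<and> src x = tgt (as ! i)"
      then have "src x = src (as ! ((i + 1) mod ?l))" using as(5) i by simp
      then show "x = as ! ((i + 1) mod ?l)"
        using inj_onD[OF isrc] x inD[of "(i+1) mod ?l"] lpos by simp
    qed
    obtain i0 where i0: "i0 < ?l" "a = as ! i0" using S(2) as(2) by (auto simp: in_set_conv_nth)
    have pw: "(N ^^ n) a = as ! ((i0 + n) mod ?l)" for n
    proof (induction n)
      case 0 then show ?case using i0 by simp
    next
      case (Suc n)
      have "(N ^^ Suc n) a = N (as ! ((i0 + n) mod ?l))" using Suc by simp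
      also have "\<dots> = as ! (((i0 + n) mod ?l + 1) mod ?l)" using nx lpos by simp
      also have "((i0 + n) mod ?l + 1) mod ?l = (i0 + Suc n) mod ?l" by (simp add: mod_Suc_eq)
      finally show ?case .
    qed
    show ?thesis
    proof
      show "orb src tgt ?D a \<subseteq> S"
      proof
        fix x assume "x \<in> orb src tgt ?D a"
        then obtain n where "x = (N ^^ n) a" unfolding orb_def by auto
        then have "x = as ! ((i0 + n) mod ?l)" using pw by simp
        moreover have "(i0 + n) mod ?l < ?l" using lpos by simp
        ultimately show "x \<in> S" using as(2) nth_mem by blast
      qed
      show "S \<subseteq> orb src tgt ?D a"
      proof
        fix x assume "x \<in> S"
        then obtain j where j: "j < ?l" "x = as ! j" using as(2) by (auto simp: in_set_conv_nth)
        have "(i0 + (?l - i0 + j)) mod ?l = j" using i0(1) j(1)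
          by (simp add: add.commute)
        then have "(N ^^ (?l - i0 + j)) a = x" using pw j by simp
        then show "x \<in> orb src tgt ?D a" unfolding orb_def by (rule range_eqI[OF sym])
      qed
    qed
  qed
  show ?thesis
  proof
    show "orbits src tgt ?D \<subseteq> C"
    proof
      fix T assume "T \<in> orbits src tgt ?D"
      then obtain a where a: "a \<in> ?D" "T = orb src tgt ?D a" unfolding orbits_def by blast
      then obtain S where "S \<in> C" "a \<in> S" by blast
      then show "T \<in> C" using key a(2) by simp
    qed
    show "C \<subseteq> orbits src tgt ?D"
    proof
      fix S assume S: "S \<in> C"
      then have "S \<noteq> {}" using gsc_props(2) gcc_gsc[OF C] by blast
      then obtain a where "a \<in> S" by blast
      then have "orb src tgt ?D a = S" "a \<in> ?D" using key[OF S] S by auto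
      then show "S \<in> orbits src tgt ?D" unfolding orbits_def by (metis imageI)
    qed
  qed
qed

lemma reindexB:
  fixes w :: "'a \<Rightarrow> 'r::comm_ring_1"
  assumes fA: "finite Ar"
  shows "(\<Sum>D\<in>gD src tgt Ar - {{}}. of_int (sign (permD src tgt D)) * (-1) ^ card D * (\<Prod>a\<in>D. w a))
       = (\<Sum>C\<in>gcc src tgt Ar. (-1) ^ card C * (\<Prod>S\<in>C. \<Prod>a\<in>S. w a))"
proof -
  have "(\<Sum>C\<in>gcc src tgt Ar. (-1) ^ card C * (\<Prod>S\<in>C. \<Prod>a\<in>S. w a))
     = (\<Sum>D\<in>gD src tgt Ar - {{}}. of_int (sign (permD src tgt D)) * (-1) ^ card D * (\<Prod>a\<in>D. w a))"
  proof (rule sum.reindex_bij_witness[of "gcc src tgt Ar" "orbits src tgt" Union])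
    fix C assume C: "C \<in> gcc src tgt Ar"
    show "orbits src tgt (\<Union>C) = C" by (rule orbits_union[OF fA C])
    have allg: "\<forall>S\<in>C. gsc src tgt Ar S" using gcc_gsc[OF C] by blast
    have gd: "\<Union>C \<in> gD src tgt Ar" by (rule union_gD[OF allg gcc_pdisj[OF C]])
    have "C \<noteq> {}" using C unfolding gcc_def by simp
    then obtain S where S: "S \<in> C" by blast
    then have "S \<noteq> {}" using gsc_props(2)[OF gcc_gsc[OF C S]] by simp
    then have "\<Union>C \<noteq> {}" using S by blast
    then show "\<Union>C \<in> gD src tgt Ar - {{}}" using gd by simp
    have fC: "finite C" by (rule gcc_finite[OF fA C])
    have sg: "sign (permD src tgt (\<Union>C)) * (-1) ^ card (\<Union>C) = (-1) ^ card C"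
      by (rule conjunct2[OF sign_union[OF fC allg gcc_pdisj[OF C]]])
    have dj: "\<forall>A\<in>C. \<forall>B\<in>C. A \<noteq> B \<longrightarrow> A \<inter> B = {}"
      using gcc_pdisj[OF C] unfolding pdisj_def by blast
    have fin: "\<forall>A\<in>C. finite A" using allg gsc_props(3)[of src tgt Ar] by blast
    have pr: "(\<Prod>a\<in>\<Union>C. w a) = (\<Prod>S\<in>C. \<Prod>a\<in>S. w a)"
      using prod.Union_disjoint[OF fin dj, of w] by (simp add: o_def)
    have "of_int (sign (permD src tgt (\<Union>C))) * (-1) ^ card (\<Union>C) = (of_int ((-1) ^ card C) :: 'r)"
      unfolding sg[symmetric] by simp
    then show "of_int (sign (permD src tgt (\<Union>C))) * (-1) ^ card (\<Union>C) * (\<Prod>a\<in>\<Union>C. w a)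
        = (-1) ^ card C * (\<Prod>S\<in>C. \<Prod>a\<in>S. w a)" using pr by simp
  next
    fix D assume D: "D \<in> gD src tgt Ar - {{}}"
    have fD: "finite D" using D fA unfolding gD_def by (auto intro: finite_subset)
    have gd: "D \<in> gD src tgt Ar" using D by simp
    interpret dset src tgt Ar D using gd fD by unfold_locales
    show "\<Union>(orbits src tgt D) = D" by (rule union_orbits)
    show "orbits src tgt D \<in> gcc src tgt Ar" using orbits_gcc D by simp
  qed
  then show ?thesis by simp
qed


definition Mat :: "('a \<Rightarrow> 'e) \<Rightarrow> ('a \<Rightarrow> 'e) \<Rightarrow> 'a set \<Rightarrow> ('a \<Rightarrow> 'r::comm_ring_1) \<Rightarrow> 'r^'e^'e" where
 "Mat src tgt Ar w = (\<chi> u v. \<Sum>a\<in>{a\<in>Ar. src a = u \<and> tgt a = v}. w a)"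

definition Opt :: "('a \<Rightarrow> 'e) \<Rightarrow> ('a \<Rightarrow> 'e) \<Rightarrow> 'a set \<Rightarrow> ('e \<Rightarrow> 'e) \<Rightarrow> 'e \<Rightarrow> 'a option set" where
 "Opt src tgt Ar p i = (if p i = i then {None} else {}) \<union> Some ` {a\<in>Ar. src a = i \<and> tgt a = p i}"

definition fo :: "('a \<Rightarrow> 'r::comm_ring_1) \<Rightarrow> 'a option \<Rightarrow> 'r" where
 "fo w x = (case x of None \<Rightarrow> 1 | Some a \<Rightarrow> - w a)"

definition Dof :: "('e \<Rightarrow> 'a option) \<Rightarrow> 'a set" where
 "Dof \<beta> = {a. \<exists>i. \<beta> i = Some a}"

definition bof :: "('a \<Rightarrow> 'e) \<Rightarrow> 'a set \<Rightarrow> 'e \<Rightarrow> 'a option" where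
 "bof src D v = (if v \<in> src ` D then Some (THE a. a \<in> D \<and> src a = v) else None)"

lemma entry:
  assumes "finite Ar"
  shows "(mat 1 - Mat src tgt Ar w) $ i $ (p i) = (\<Sum>x\<in>Opt src tgt Ar p i. fo w x)"
proof -
  let ?B = "{a\<in>Ar. src a = i \<and> tgt a = p i}"
  have fB: "finite ?B" using assms by simp
  have "(\<Sum>x\<in>Opt src tgt Ar p i. fo w x) = (\<Sum>x\<in>(if p i = i then {None} else {}). fo w x) + (\<Sum>x\<in>Some ` ?B. fo w x)"
    unfolding Opt_def by (rule sum.union_disjoint) (use fB in auto)
  also have "(\<Sum>x\<in>Some ` ?B. fo w x) = (\<Sum>a\<in>?B. - w a)"
    by (subst sum.reindex) (auto simp: fo_def)
  also have "(\<Sum>x\<in>(if p i = i then {None} else {}). fo w x) = (if i = p i then 1 else 0)"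
    by (auto simp: fo_def)
  finally show ?thesis unfolding Mat_def mat_def by (simp add: sum_negf)
qed

context
  fixes src tgt :: "'a \<Rightarrow> 'e::finite" and Ar :: "'a set" and p :: "'e \<Rightarrow> 'e" and \<beta> :: "'e \<Rightarrow> 'a option"
  assumes fA: "finite Ar" and pp: "p permutes UNIV" and bo: "\<And>i. \<beta> i \<in> Opt src tgt Ar p i"
begin

lemma bSome: assumes "\<beta> i = Some a" shows "a \<in> Ar" "src a = i" "tgt a = p i"
  using bo[of i] assms unfolding Opt_def by (auto split: if_splits)

lemma bNone: assumes "\<beta> i = None" shows "p i = i"
  using bo[of i] assms unfolding Opt_def by (auto split: if_splits)

lemma Dof_src: "inj_on src (Dof \<beta>)"
proof (rule inj_onI)
  fix a b assume "a \<in> Dof \<beta>" "b \<in> Dof \<beta>" and e: "src a = src b"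
  then obtain i j where ij: "\<beta> i = Some a" "\<beta> j = Some b" unfolding Dof_def by blast
  have "i = j" using bSome(2)[OF ij(1)] bSome(2)[OF ij(2)] e by simp
  then show "a = b" using ij by simp
qed

lemma Dof_gD: "Dof \<beta> \<in> gD src tgt Ar"
proof -
  let ?F = "{i. \<beta> i \<noteq> None}"
  have sub: "Dof \<beta> \<subseteq> Ar" unfolding Dof_def using bSome(1) by blast
  have it: "inj_on tgt (Dof \<beta>)"
  proof (rule inj_onI)
    fix a b assume "a \<in> Dof \<beta>" "b \<in> Dof \<beta>" "tgt a = tgt b"
    then obtain i j where ij: "\<beta> i = Some a" "\<beta> j = Some b" unfolding Dof_def by blast
    then have "p i = p j" using bSome(3)[OF ij(1)] bSome(3)[OF ij(2)] \<open>tgt a = tgt b\<close> by simp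
    then have "i = j" using permutes_inj[OF pp] by (auto dest: injD)
    then show "a = b" using ij by simp
  qed
  have srcF: "src ` Dof \<beta> = ?F"
  proof
    show "src ` Dof \<beta> \<subseteq> ?F"
    proof
      fix x assume "x \<in> src ` Dof \<beta>"
      then obtain a i where "\<beta> i = Some a" "x = src a" unfolding Dof_def by auto
      then show "x \<in> ?F" using bSome(2) by auto
    qed
    show "?F \<subseteq> src ` Dof \<beta>"
    proof
      fix i assume "i \<in> ?F"
      then obtain a where a: "\<beta> i = Some a" by auto
      then have "a \<in> Dof \<beta>" unfolding Dof_def by blast
      then show "i \<in> src ` Dof \<beta>" using bSome(2)[OF a] by (intro rev_image_eqI) auto
    qed
  qed
  have tgtF: "tgt ` Dof \<beta> = p ` ?F"
  proof
    show "tgt ` Dof \<beta> \<subseteq> p ` ?F"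
    proof
      fix x assume "x \<in> tgt ` Dof \<beta>"
      then obtain a i where ai: "\<beta> i = Some a" "x = tgt a" unfolding Dof_def by auto
      then have "x = p i" using bSome(3) by auto
      then show "x \<in> p ` ?F" using ai by auto
    qed
    show "p ` ?F \<subseteq> tgt ` Dof \<beta>"
    proof
      fix x assume "x \<in> p ` ?F"
      then obtain i a where a: "x = p i" "\<beta> i = Some a" by auto
      then have "a \<in> Dof \<beta>" unfolding Dof_def by blast
      then show "x \<in> tgt ` Dof \<beta>" using bSome(3)[OF a(2)] a(1) by (intro rev_image_eqI) auto
    qed
  qed
  have pF: "p ` ?F \<subseteq> ?F"
  proof
    fix x assume "x \<in> p ` ?F"
    then obtain i where i: "x = p i" "\<beta> i \<noteq> None" by auto
    show "x \<in> ?F"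
    proof (cases "p i = i")
      case True then show ?thesis using i by simp
    next
      case False
      show ?thesis
      proof (rule ccontr)
        assume "x \<notin> ?F"
        then have "p (p i) = p i" using bNone i(1) by auto
        then have "p i = i" using permutes_inj[OF pp] by (auto dest: injD)
        then show False using False by simp
      qed
    qed
  qed
  have "card (p ` ?F) = card ?F" by (rule card_image[OF inj_on_subset[OF permutes_inj[OF pp]]]) simp
  then have "p ` ?F = ?F" by (rule card_subset_eq[OF finite pF])
  then show ?thesis unfolding gD_def using sub Dof_src it srcF tgtF by auto
qed

lemma bof_Dof: "bof src (Dof \<beta>) = \<beta>"
proof
  fix v
  show "bof src (Dof \<beta>) v = \<beta> v"
  proof (cases "\<beta> v")
    case None
    have "v \<notin> src ` Dof \<beta>"
    proof
      assume "v \<in> src ` Dof \<beta>"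
      then obtain a i where "\<beta> i = Some a" "v = src a" unfolding Dof_def by auto
      then show False using bSome(2) None by auto
    qed
    then show ?thesis using None unfolding bof_def by simp
  next
    case (Some a)
    have a: "a \<in> Dof \<beta>" "src a = v" using Some bSome(2) unfolding Dof_def by auto
    then show ?thesis unfolding bof_def using the_src[OF Dof_src a(1)] Some by auto
  qed
qed

lemma permD_Dof: "permD src tgt (Dof \<beta>) = p"
proof
  fix v
  show "permD src tgt (Dof \<beta>) v = p v"
  proof (cases "\<beta> v")
    case None
    have "v \<notin> src ` Dof \<beta>"
    proof
      assume "v \<in> src ` Dof \<beta>"
      then obtain a i where "\<beta> i = Some a" "v = src a" unfolding Dof_def by auto
      then show False using bSome(2) None by auto
    qed
    then show ?thesis using permD_out[of v src "Dof \<beta>" tgt] bNone[OF None] by simp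
  next
    case (Some a)
    have a: "a \<in> Dof \<beta>" "src a = v" using Some bSome(2) unfolding Dof_def by auto
    then show ?thesis using permD_in[OF Dof_src a(1), of tgt] bSome(3)[OF Some] by simp
  qed
qed

lemma prod_fo: "(\<Prod>i\<in>UNIV. fo w (\<beta> i)) = (-1) ^ card (Dof \<beta>) * (\<Prod>a\<in>Dof \<beta>. w a)"
proof -
  let ?F = "{i. \<beta> i \<noteq> None}"
  have "(\<Prod>i\<in>UNIV. fo w (\<beta> i)) = (\<Prod>i\<in>?F. fo w (\<beta> i))"
    by (rule prod.mono_neutral_right) (auto simp: fo_def)
  also have "\<dots> = (\<Prod>a\<in>Dof \<beta>. - w a)"
  proof (rule prod.reindex_bij_witness[of _ src "\<lambda>i. the (\<beta> i)"])
    fix i assume "i \<in> ?F"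
    then obtain a where a: "\<beta> i = Some a" by auto
    then show "src (the (\<beta> i)) = i" using bSome(2) by simp
    show "the (\<beta> i) \<in> Dof \<beta>" using a unfolding Dof_def by auto
    show "- w (the (\<beta> i)) = fo w (\<beta> i)" using a by (simp add: fo_def)
  next
    fix a assume "a \<in> Dof \<beta>"
    then obtain i where i: "\<beta> i = Some a" unfolding Dof_def by auto
    then show "the (\<beta> (src a)) = a" "src a \<in> ?F" using bSome(2)[OF i] by auto
  qed
  also have "\<dots> = (\<Prod>a\<in>Dof \<beta>. (-1) * w a)" by (rule prod.cong) simp_all
  also have "\<dots> = (-1) ^ card (Dof \<beta>) * (\<Prod>a\<in>Dof \<beta>. w a)"
    by (subst prod.distrib) simp
  finally show ?thesis .
qed

end

lemma Dof_bof: assumes isr: "inj_on src D" shows "Dof (bof src D) = D"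
proof
  show "Dof (bof src D) \<subseteq> D"
  proof
    fix x assume "x \<in> Dof (bof src D)"
    then obtain i where i: "bof src D i = Some x" unfolding Dof_def by auto
    then have "i \<in> src ` D" unfolding bof_def by (simp split: if_splits)
    then obtain a where a: "a \<in> D" "i = src a" by auto
    then have "bof src D i = Some a" unfolding bof_def using the_src[OF isr a(1)] by simp
    then show "x \<in> D" using i a by simp
  qed
  show "D \<subseteq> Dof (bof src D)"
  proof
    fix a assume a: "a \<in> D"
    then have "bof src D (src a) = Some a" unfolding bof_def using the_src[OF isr a] by simp
    then show "a \<in> Dof (bof src D)" unfolding Dof_def by blast
  qed
qed

lemma permD_permutes:
  fixes src tgt :: "'a \<Rightarrow> 'e::finite"
  assumes "D \<in> gD src tgt Ar"
  shows "permD src tgt D permutes UNIV"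
proof -
  have isr: "inj_on src D" and it: "inj_on tgt D" and im: "src ` D = tgt ` D"
    using assms unfolding gD_def by auto
  have "inj (permD src tgt D)"
  proof (rule injI)
    fix x y assume eq: "permD src tgt D x = permD src tgt D y"
    have c: "permD src tgt D v \<in> src ` D \<longleftrightarrow> v \<in> src ` D" for v
    proof (cases "v \<in> src ` D")
      case True
      then obtain a where "a \<in> D" "v = src a" by auto
      then show ?thesis using permD_in[OF isr, of a tgt] im True by auto
    qed (simp add: permD_out)
    show "x = y"
    proof (cases "x \<in> src ` D")
      case True
      then have "y \<in> src ` D" using c eq by metis
      then obtain a b where ab: "a \<in> D" "x = src a" "b \<in> D" "y = src b" using True by auto
      then have "tgt a = tgt b" using eq permD_in[OF isr, of _ tgt] by simp
      then show ?thesis using inj_onD[OF it _ ab(1,3)] ab by simp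
    next
      case False
      then have "y \<notin> src ` D" using c eq by metis
      then show ?thesis using False eq permD_out by metis
    qed
  qed
  then have "bij (permD src tgt D)" using finite_UNIV_inj_surj[of "permD src tgt D"] by (simp add: bij_def)
  then show ?thesis by (rule bij_imp_permutes) simp
qed

lemma bof_Opt:
  assumes "D \<in> gD src tgt Ar"
  shows "bof src D i \<in> Opt src tgt Ar (permD src tgt D) i"
proof (cases "i \<in> src ` D")
  case True
  then obtain a where a: "a \<in> D" "i = src a" by auto
  have isr: "inj_on src D" using assms unfolding gD_def by auto
  have "bof src D i = Some a" unfolding bof_def using True a the_src[OF isr a(1)] by simp
  moreover have "a \<in> Ar" using a assms unfolding gD_def by auto
  moreover have "permD src tgt D i = tgt a" using a permD_in[OF isr a(1)] by simp
  ultimately show ?thesis unfolding Opt_def using a by auto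
next
  case False
  then show ?thesis unfolding bof_def Opt_def using permD_out[OF False] by simp
qed

lemma detA:
  fixes src tgt :: "'a \<Rightarrow> 'e::finite" and w :: "'a \<Rightarrow> 'r::comm_ring_1"
  assumes fA: "finite Ar"
  shows "det (mat 1 - Mat src tgt Ar w) =
    (\<Sum>D\<in>gD src tgt Ar. of_int (sign (permD src tgt D)) * (-1) ^ card D * (\<Prod>a\<in>D. w a))"
proof -
  let ?P = "{p. p permutes (UNIV::'e set)}"
  let ?O = "Opt src tgt Ar"
  have fO: "finite (?O p i)" for p i unfolding Opt_def using fA by auto
  have "det (mat 1 - Mat src tgt Ar w) = (\<Sum>p\<in>?P. of_int (sign p) * (\<Prod>i\<in>UNIV. (mat 1 - Mat src tgt Ar w) $ i $ p i))"
    unfolding det_def by simp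
  also have "\<dots> = (\<Sum>p\<in>?P. of_int (sign p) * (\<Sum>\<beta>\<in>PiE UNIV (?O p). \<Prod>i\<in>UNIV. fo w (\<beta> i)))"
  proof -
    have eqp: "(\<Prod>i\<in>UNIV. (mat 1 - Mat src tgt Ar w) $ i $ p i) = (\<Sum>\<beta>\<in>PiE UNIV (?O p). \<Prod>i\<in>UNIV. fo w (\<beta> i))" for p
    proof -
      have "(\<Prod>i\<in>UNIV. (mat 1 - Mat src tgt Ar w) $ i $ p i) = (\<Prod>i\<in>UNIV. \<Sum>x\<in>?O p i. fo w x)"
        by (rule prod.cong[OF refl], rule entry[OF fA])
      also have "\<dots> = (\<Sum>\<beta>\<in>PiE UNIV (?O p). \<Prod>i\<in>UNIV. fo w (\<beta> i))"
        by (rule prod_sum_PiE[OF finite fO])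
      finally show ?thesis .
    qed
    show ?thesis by (simp only: eqp)
  qed
  also have "\<dots> = (\<Sum>p\<in>?P. \<Sum>\<beta>\<in>PiE UNIV (?O p). of_int (sign p) * (\<Prod>i\<in>UNIV. fo w (\<beta> i)))"
    by (simp add: sum_distrib_left)
  also have "\<dots> = (\<Sum>(p,\<beta>)\<in>Sigma ?P (\<lambda>p. PiE UNIV (?O p)). of_int (sign p) * (\<Prod>i\<in>UNIV. fo w (\<beta> i)))"
    by (rule sum.Sigma) (auto intro: finite_permutations finite_PiE fO)
  also have "\<dots> = (\<Sum>D\<in>gD src tgt Ar. of_int (sign (permD src tgt D)) * (-1) ^ card D * (\<Prod>a\<in>D. w a))"
  proof (rule sum.reindex_bij_witness[of _ "\<lambda>D. (permD src tgt D, bof src D)" "\<lambda>(p,\<beta>). Dof \<beta>"])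
    fix x assume x: "x \<in> Sigma ?P (\<lambda>p. PiE UNIV (?O p))"
    obtain p \<beta> where pb: "x = (p, \<beta>)" by (cases x)
    have pp: "p permutes UNIV" and bo: "\<And>i. \<beta> i \<in> ?O p i" using x pb by (auto simp: PiE_UNIV_domain)
    show "(permD src tgt ((\<lambda>(p, \<beta>). Dof \<beta>) x), bof src ((\<lambda>(p, \<beta>). Dof \<beta>) x)) = x"
      using permD_Dof[OF fA pp bo] bof_Dof[OF fA pp bo] pb by simp
    show "(\<lambda>(p, \<beta>). Dof \<beta>) x \<in> gD src tgt Ar" using Dof_gD[OF fA pp bo] pb by simp
    show "of_int (sign (permD src tgt ((\<lambda>(p, \<beta>). Dof \<beta>) x))) * (- 1) ^ card ((\<lambda>(p, \<beta>). Dof \<beta>) x) *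
        (\<Prod>a\<in>(\<lambda>(p, \<beta>). Dof \<beta>) x. w a) = (case x of (p, \<beta>) \<Rightarrow> of_int (sign p) * (\<Prod>i\<in>UNIV. fo w (\<beta> i)))"
      using permD_Dof[OF fA pp bo] prod_fo[OF fA pp bo, of w] pb by simp
  next
    fix D assume D: "D \<in> gD src tgt Ar"
    have isr: "inj_on src D" using D unfolding gD_def by auto
    show "(\<lambda>(p, \<beta>). Dof \<beta>) (permD src tgt D, bof src D) = D" using Dof_bof[OF isr] by simp
    show "(permD src tgt D, bof src D) \<in> Sigma ?P (\<lambda>p. PiE UNIV (?O p))"
      using permD_permutes[OF D] bof_Opt[OF D] by (auto simp: PiE_UNIV_domain)
  qed
  finally show ?thesis .
qed


lemma grp_elt_add: "grp_elt (a + b) = grp_elt a * grp_elt b"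
  unfolding grp_elt_def by (simp add: mult_single)

lemma grp_elt_zero: "grp_elt 0 = 1"
  unfolding grp_elt_def by simp

lemma grp_elt_sum: "grp_elt (sum f A) = (\<Prod>x\<in>A. grp_elt (f x))"
  by (induct A rule: infinite_finite_induct) (simp_all add: grp_elt_zero grp_elt_add)

lemma finite_flow_arcs: "finite (flow_arcs tedge side veer :: ('t::finite \<times> nat) set)"
proof -
  have "flow_arcs tedge side veer \<subseteq> UNIV \<times> {..4}"
    unfolding flow_arcs_def opp_sides_def by auto
  then show ?thesis by (rule finite_subset) simp
qed

lemma veering_transpose:
  fixes bedge tedge :: "'t::finite \<Rightarrow> 'e::finite"
    and side :: "'t \<Rightarrow> nat \<Rightarrow> 'e"
    and veer :: "'e \<Rightarrow> bool"
    and htop :: "'t \<Rightarrow> 'g::ab_group_add"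
    and hside :: "'t \<Rightarrow> nat \<Rightarrow> 'g"
  assumes bij: "bij bedge"
  shows "veering_matrix bedge tedge side veer htop hside
       = transpose (mat 1 - flow_adj bedge tedge side veer htop hside)"
proof -
  have "veering_matrix bedge tedge side veer htop hside $ u $ b
      = (mat 1 - flow_adj bedge tedge side veer htop hside) $ b $ u" for u b
  proof -
    define t where "t = inv bedge b"
    have bt: "bedge t = b" unfolding t_def using bij by (simp add: bij_is_surj surj_f_inv_f)
    let ?A = "{a \<in> flow_arcs tedge side veer. arc_src bedge a = b \<and> arc_tgt tedge side a = u}"
    let ?K = "{k \<in> opp_sides tedge side veer t. side t k = u}"
    have fK: "finite (opp_sides tedge side veer t)" unfolding opp_sides_def by simp
    have A: "?A = (if tedge t = u then {(t,4)} else {}) \<union> (\<lambda>k. (t,k)) ` ?K"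
    proof (rule set_eqI)
      fix a :: "'t \<times> nat"
      have btiff: "bedge x = b \<longleftrightarrow> x = t" for x
        using bt bij by (metis bij_def injD)
      obtain x k where a: "a = (x, k)" by (cases a)
      show "a \<in> ?A \<longleftrightarrow> a \<in> (if tedge t = u then {(t,4)} else {}) \<union> (\<lambda>k. (t,k)) ` ?K"
        unfolding a flow_arcs_def arc_src_def arc_tgt_def opp_sides_def
        by (simp add: btiff) (auto split: if_splits)
    qed
    have "(\<Sum>a\<in>?A. grp_elt (arc_label htop hside a))
        = (\<Sum>a\<in>(if tedge t = u then {(t,4)} else {}). grp_elt (arc_label htop hside a))
          + (\<Sum>a\<in>(\<lambda>k. (t,k)) ` ?K. grp_elt (arc_label htop hside a))"
      unfolding A by (rule sum.union_disjoint) (use fK in \<open>auto simp: opp_sides_def\<close>)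
    also have "(\<Sum>a\<in>(\<lambda>k. (t,k)) ` ?K. grp_elt (arc_label htop hside a)) = (\<Sum>k\<in>?K. grp_elt (hside t k))"
      by (subst sum.reindex) (auto simp: inj_on_def arc_label_def opp_sides_def)
    also have "(\<Sum>k\<in>?K. grp_elt (hside t k))
        = (\<Sum>k\<in>opp_sides tedge side veer t. if u = side t k then grp_elt (hside t k) else 0)"
      using sum.inter_filter[OF fK, of "\<lambda>k. grp_elt (hside t k)" "\<lambda>k. u = side t k"]
      by (simp add: eq_commute)
    also have "(\<Sum>a\<in>(if tedge t = u then {(t,4)} else {}). grp_elt (arc_label htop hside a))
        = (if u = tedge t then grp_elt (htop t) else 0)" by (auto simp: arc_label_def)
    finally have F: "(\<Sum>a\<in>?A. grp_elt (arc_label htop hside a))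
        = (if u = tedge t then grp_elt (htop t) else 0)
          + (\<Sum>k\<in>opp_sides tedge side veer t. if u = side t k then grp_elt (hside t k) else 0)" .
    have V: "veering_matrix bedge tedge side veer htop hside $ u $ b
       = (if u = b then 1 else 0) - ((if u = tedge t then grp_elt (htop t) else 0)
          + (\<Sum>k\<in>opp_sides tedge side veer t. if u = side t k then grp_elt (hside t k) else 0))"
      unfolding veering_matrix_def Let_def t_def by (simp add: diff_diff_eq)
    have W: "(mat 1 - flow_adj bedge tedge side veer htop hside) $ b $ u
       = (if b = u then 1 else 0) - (\<Sum>a\<in>?A. grp_elt (arc_label htop hside a))"
      unfolding flow_adj_def mat_def by simp
    show ?thesis unfolding V W F by (simp add: eq_commute[of u b])
  qed
  then show ?thesis by (simp add: vec_eq_iff transpose_def)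
qed


theorem mainTheorem6:
  fixes bedge tedge :: "'t::finite \<Rightarrow> 'e::finite"
    and side :: "'t \<Rightarrow> nat \<Rightarrow> 'e"
    and veer :: "'e \<Rightarrow> bool"
    and htop :: "'t \<Rightarrow> 'g::ab_group_add"
    and hside :: "'t \<Rightarrow> nat \<Rightarrow> 'g"
  assumes "veering_data bedge tedge side veer"
  shows "veering_poly bedge tedge side veer htop hside
           = det (mat 1 - flow_adj bedge tedge side veer htop hside)
       \<and> veering_poly bedge tedge side veer htop hside
           = 1 + (\<Sum>C\<in>cycle_collections bedge tedge side veer.
                    (-1) ^ card C * cycle_class htop hside C)"
proof -
  have bij: "bij bedge" using assms unfolding veering_data_def by simp
  let ?src = "arc_src bedge" and ?tgt = "arc_tgt tedge side" and ?Ar = "flow_arcs tedge side veer"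
    and ?w = "\<lambda>a. grp_elt (arc_label htop hside a)"
  have fA: "finite ?Ar" by (rule finite_flow_arcs)
  have M: "flow_adj bedge tedge side veer htop hside = Mat ?src ?tgt ?Ar ?w"
    unfolding flow_adj_def Mat_def by simp
  have P1: "veering_poly bedge tedge side veer htop hside = det (mat 1 - flow_adj bedge tedge side veer htop hside)"
    unfolding veering_poly_def veering_transpose[OF bij] by simp
  have e: "{} \<in> gD ?src ?tgt ?Ar" by (simp add: gD_def)
  have fg: "finite (gD ?src ?tgt ?Ar)"
  proof (rule finite_subset)
    show "gD ?src ?tgt ?Ar \<subseteq> Pow ?Ar" unfolding gD_def by auto
    show "finite (Pow ?Ar)" using fA by simp
  qed
  have pe: "permD ?src ?tgt {} = (\<lambda>v. v)" by (auto simp: permD_def)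
  have D: "det (mat 1 - Mat ?src ?tgt ?Ar ?w)
      = 1 + (\<Sum>C\<in>gcc ?src ?tgt ?Ar. (-1) ^ card C * (\<Prod>S\<in>C. \<Prod>a\<in>S. ?w a))"
    unfolding detA[OF fA] sum.remove[OF fg e] reindexB[OF fA] pe by simp
  have CC: "cycle_collections bedge tedge side veer = gcc ?src ?tgt ?Ar"
    unfolding cycle_collections_def gcc_def simple_cycle_def gsc_def by simp
  have cls: "cycle_class htop hside C = (\<Prod>S\<in>C. \<Prod>a\<in>S. ?w a)" for C
    unfolding cycle_class_def grp_elt_sum ..
  show ?thesis using P1 M D CC cls by simp
qed


end
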